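(* Assume $f(\cdot,u_t)$ is a diffeomorphism for all $t$ and that the relevant matrices are invertible. Consider (A) the pure fading-memory extended Kalman filter in the form $s_{t|t-1}=f(s_{t-1},u_t)$, $P_{t|t-1}=(1+\alpha_t)F_{t-1}P_{t-1}F_{t-1}^\top$, $\hat y_t=h(s_{t|t-1},u_t)$, $P_t^{-1}=P_{t|t-1}^{-1}+\mathcal I_t$, $s_t=s_{t|t-1}+P_t g_t^\top$; and (B) the recursion $s_{t|t-1}=f(s_{t-1},u_t)$, $\hat y_t=h(s_{t|t-1},u_t)$, $J_t=(1-\gamma_t)(F_{t-1}^{-1})^\top J_{t-1}F_{t-1}^{-1}+\gamma_t\mathcal I_t$, $s_t=s_{t|t-1}+\eta_tJ_t^{-1}g_t^\top$, where $F_{t-1}=\partial f/\partial s|_{(s_{t-1},u_t)}$, $g_t=\partial\ln p_{\mathrm{obs}}(y_t\mid h(s,u_t))/\partial s|_{s=s_{t|t-1}}$ and $\mathcal I_t=\mathbb E_{y\sim p_{\mathrm{obs}}(\cdot\mid\hat y_t)}[(\partial\ln p_{\mathrm{obs}}(y\mid h(s,u_t))/\partial s|_{s=s_{t|t-1}})^{\otimes2}]$. If the hyperparameters satisfy $\eta_t=\gamma_t$ and $\frac1{\eta_t}=\frac1{1+\alpha_t}\frac1{\eta_{t-1}}+1$ for $t\ge1$, and both are initialized at the same $s_0$ with $P_0=\eta_0J_0^{-1}$, then for all $t\ge0$ both produce the same $s_t$ and $P_t=\eta_tJ_t^{-1}$.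
   Context: Conventions: gradients of real functions are row vectors; for a row vector $v$, $v^{\otimes2}=v^\top v$. $p_{\mathrm{obs}}(y\mid\hat y)$ is an exponential family parameterized by its mean parameter $\hat y$; $f,h$ are smooth; $u_t$ are inputs, $y_t$ observations, $\alpha_t\ge0$ fading-memory weights, $\eta_t$ learning rates, $\gamma_t$ decay rates. *)

theory Defs
  imports "HOL-Analysis.Analysis"
begin

definition outer_sq :: "real^'n \<Rightarrow> real^'n^'n" where
  "outer_sq v = (\<chi> i j. v $ i * v $ j)"

definition exp_family_mean ::
  "'y measure \<Rightarrow> ('y \<Rightarrow> real^'m) \<Rightarrow> (real^'m) set \<Rightarrow> (real^'m \<Rightarrow> 'y \<Rightarrow> real) \<Rightarrow> bool" where
  "exp_family_mean \<mu> T \<Theta> p \<longleftrightarrow>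
     (\<exists>(\<theta> :: real^'m \<Rightarrow> real^'m) (A :: real^'m \<Rightarrow> real). \<forall>m\<in>\<Theta>.
        (\<forall>y\<in>space \<mu>. p m y = exp (\<theta> m \<bullet> T y - A m))
      \<and> integrable \<mu> (p m) \<and> (\<integral>y. p m y \<partial>\<mu>) = 1
      \<and> integrable \<mu> (\<lambda>y. p m y *\<^sub>R T y) \<and> (\<integral>y. p m y *\<^sub>R T y \<partial>\<mu>) = m)"

text \<open>Fisher information E_{y ~ p(.|h(s,u))}[(grad_s ln p(y|h(s,u)))^{\<otimes>2}], where
  G s u y is the gradient (as a vector) of s \<mapsto> ln p(y | h(s,u)).\<close>
definition fisher ::
  "'y measure \<Rightarrow> (real^'m \<Rightarrow> 'y \<Rightarrow> real) \<Rightarrow> (real^'n \<Rightarrow> 'u \<Rightarrow> real^'m)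
   \<Rightarrow> (real^'n \<Rightarrow> 'u \<Rightarrow> 'y \<Rightarrow> real^'n) \<Rightarrow> real^'n \<Rightarrow> 'u \<Rightarrow> real^'n^'n" where
  "fisher \<mu> p h G s u = (\<integral>y. p (h s u) y *\<^sub>R outer_sq (G s u y) \<partial>\<mu>)"

end

theory Submission imports Defs begin

lemma minv_props:
  fixes A :: "real^'n^'n" assumes "invertible A"
  shows "A ** matrix_inv A = mat 1" "matrix_inv A ** A = mat 1"
  using someI_ex[of "\<lambda>A'. A ** A' = mat 1 \<and> A' ** A = mat 1"] assms
  unfolding invertible_def matrix_inv_def by auto

lemma minv_unique:
  fixes A B :: "real^'n^'n" assumes "A ** B = mat 1"
  shows "matrix_inv A = B"
proof -
  have i: "invertible A" using assms invertible_right_inverse by blast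
  have "matrix_inv A = matrix_inv A ** (A ** B)" using assms by simp
  also have "\<dots> = B" by (metis matrix_mul_assoc minv_props(2)[OF i] matrix_mul_lid)
  finally show ?thesis .
qed

lemma minv_minv:
  fixes A :: "real^'n^'n" assumes "invertible A"
  shows "matrix_inv (matrix_inv A) = A"
  by (rule minv_unique) (rule minv_props(2)[OF assms])

lemma minv_scale:
  fixes A :: "real^'n^'n" assumes "invertible A" "c \<noteq> 0"
  shows "matrix_inv (c *\<^sub>R A) = (1/c) *\<^sub>R matrix_inv A"
  by (rule minv_unique) (simp add: matrix_scalar_ac scalar_matrix_assoc[symmetric] minv_props(1)[OF assms(1)] assms(2))

lemma transp_inv:
  fixes F :: "real^'n^'n" assumes "invertible F"
  shows "transpose F ** transpose (matrix_inv F) = mat 1"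
  by (metis matrix_transpose_mul minv_props(2)[OF assms] transpose_mat)

lemma step:
  fixes F Pp J' I :: "real^'n^'n" and a e e' :: real
  assumes invM: "invertible ((1 + a) *\<^sub>R (F ** Pp ** transpose F))"
    and Pp: "Pp = e' *\<^sub>R matrix_inv J'" and invJ': "invertible J'"
    and a: "a \<ge> 0" and e: "e > 0" and e': "e' > 0"
    and rec: "1 / e = 1 / (1 + a) * (1 / e') + 1"
    and PAt: "matrix_inv PAt = matrix_inv ((1 + a) *\<^sub>R (F ** Pp ** transpose F)) + I"
    and invPA: "invertible PAt" and invJ: "invertible Jt"
    and Jt: "Jt = (1 - e) *\<^sub>R (transpose (matrix_inv F) ** J' ** matrix_inv F) + e *\<^sub>R I"
  shows "PAt = e *\<^sub>R matrix_inv Jt"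
proof -
  obtain N where N: "(1 + a) *\<^sub>R (F ** Pp ** transpose F) ** N = mat 1"
    using invM invertible_right_inverse by blast
  have "F ** ((1 + a) *\<^sub>R (Pp ** transpose F ** N)) = mat 1"
    using N by (simp add: matrix_scalar_ac scalar_matrix_assoc matrix_mul_assoc)
  hence iF: "invertible F" using invertible_right_inverse by blast
  define K where "K = transpose (matrix_inv F) ** J' ** matrix_inv F"
  have c0: "(1 + a) * e' \<noteq> 0" using a e' by simp
  have "(1 + a) *\<^sub>R (F ** Pp ** transpose F) ** ((1 / ((1 + a) * e')) *\<^sub>R K)
      = ((1 + a) * e' * (1 / ((1 + a) * e'))) *\<^sub>R (F ** matrix_inv J' ** (transpose F ** transpose (matrix_inv F)) ** J' ** matrix_inv F)"
    unfolding K_def Pp by (simp add: matrix_scalar_ac scalar_matrix_assoc[symmetric] matrix_mul_assoc)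
  also have "\<dots> = mat 1"
    proof -
    have "F ** matrix_inv J' ** J' ** matrix_inv F = F ** (matrix_inv J' ** J') ** matrix_inv F"
      by (simp add: matrix_mul_assoc)
    also have "\<dots> = mat 1" by (simp add: minv_props[OF invJ'] minv_props[OF iF])
    finally show ?thesis using c0 by (simp add: transp_inv[OF iF])
  qed
  finally have "matrix_inv ((1 + a) *\<^sub>R (F ** Pp ** transpose F)) = (1 / ((1 + a) * e')) *\<^sub>R K"
    by (rule minv_unique)
  hence P1: "matrix_inv PAt = (1 / ((1 + a) * e')) *\<^sub>R K + I" using PAt by simp
  have ee: "1 - e = e * (1 / ((1 + a) * e'))"
    using rec e a e' by (simp add: field_simps)
  have JJ: "Jt = e *\<^sub>R matrix_inv PAt"
    unfolding Jt P1 K_def[symmetric] ee by (simp add: scaleR_add_right)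
  hence "matrix_inv Jt = (1/e) *\<^sub>R PAt"
  proof -
    have "invertible (matrix_inv PAt)"
      using minv_props(2)[OF invPA] invertible_right_inverse by blast
    thus ?thesis using JJ minv_scale[of "matrix_inv PAt" e] e minv_minv[OF invPA] by simp
  qed
  thus ?thesis using e by simp
qed

lemma scale_mv: fixes M :: "real^'n^'n" shows "(c *\<^sub>R M) *v v = c *\<^sub>R (M *v v)"
  by (simp add: vec_eq_iff matrix_vector_mult_def sum_distrib_left mult.assoc)

theorem proposition14:
  fixes f :: "real^'n \<Rightarrow> 'u \<Rightarrow> real^'n"
    and Fm :: "real^'n \<Rightarrow> 'u \<Rightarrow> real^'n^'n"
    and h :: "real^'n \<Rightarrow> 'u \<Rightarrow> real^'m"
    and \<mu> :: "'y measure" and T :: "'y \<Rightarrow> real^'m" and \<Theta> :: "(real^'m) set"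
    and p :: "real^'m \<Rightarrow> 'y \<Rightarrow> real"
    and G :: "real^'n \<Rightarrow> 'u \<Rightarrow> 'y \<Rightarrow> real^'n"
    and u :: "nat \<Rightarrow> 'u" and y :: "nat \<Rightarrow> 'y"
    and \<alpha> \<eta> \<gamma> :: "nat \<Rightarrow> real"
    and sA :: "nat \<Rightarrow> real^'n" and PA :: "nat \<Rightarrow> real^'n^'n"
    and sB :: "nat \<Rightarrow> real^'n" and J :: "nat \<Rightarrow> real^'n^'n"
  assumes expfam: "exp_family_mean \<mu> T \<Theta> p" and \<Theta>_open: "open \<Theta>"
    and h_range: "\<And>s v. h s v \<in> \<Theta>"
    and f_deriv: "\<And>s v. ((\<lambda>s'. f s' v) has_derivative (\<lambda>w. Fm s v *v w)) (at s)"
    and f_diffeo: "\<And>v. \<exists>g. (\<forall>s. g (f s v) = s \<and> f (g s) v = s) \<and> (\<forall>s. g differentiable (at s))"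
    and G_grad: "\<And>s v z. z \<in> space \<mu> \<Longrightarrow>
                   ((\<lambda>s'. ln (p (h s' v) z)) has_derivative (\<lambda>w. G s v z \<bullet> w)) (at s)"
    and y_space: "\<And>t. y t \<in> space \<mu>"
    and \<alpha>_nonneg: "\<And>t. \<alpha> t \<ge> 0"
    and \<eta>_pos: "\<And>t. \<eta> t > 0"
    and \<gamma>_eq: "\<And>t. t \<ge> 1 \<Longrightarrow> \<gamma> t = \<eta> t"
    and \<eta>_rec: "\<And>t. t \<ge> 1 \<Longrightarrow> 1 / \<eta> t = 1 / (1 + \<alpha> t) * (1 / \<eta> (t - 1)) + 1"
    and init_s: "sA 0 = sB 0"
    and init_P: "PA 0 = \<eta> 0 *\<^sub>R matrix_inv (J 0)"
    \<comment> \<open>invertibility of the relevant matrices\<close>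
    and inv_PA: "\<And>t. invertible (PA t)"
    and inv_J: "\<And>t. invertible (J t)"
    and inv_Ppred: "\<And>t. t \<ge> 1 \<Longrightarrow>
          invertible ((1 + \<alpha> t) *\<^sub>R (Fm (sA (t - 1)) (u t) ** PA (t - 1) ** transpose (Fm (sA (t - 1)) (u t))))"
    \<comment> \<open>(A) pure fading-memory extended Kalman filter, t \<ge> 1\<close>
    and A_P: "\<And>t. t \<ge> 1 \<Longrightarrow>
          matrix_inv (PA t) =
            matrix_inv ((1 + \<alpha> t) *\<^sub>R (Fm (sA (t - 1)) (u t) ** PA (t - 1) ** transpose (Fm (sA (t - 1)) (u t))))
            + fisher \<mu> p h G (f (sA (t - 1)) (u t)) (u t)"
    and A_s: "\<And>t. t \<ge> 1 \<Longrightarrow>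
          sA t = f (sA (t - 1)) (u t) + PA t *v G (f (sA (t - 1)) (u t)) (u t) (y t)"
    \<comment> \<open>(B) natural-gradient-type recursion, t \<ge> 1\<close>
    and B_J: "\<And>t. t \<ge> 1 \<Longrightarrow>
          J t = (1 - \<gamma> t) *\<^sub>R (transpose (matrix_inv (Fm (sB (t - 1)) (u t))) ** J (t - 1)
                                  ** matrix_inv (Fm (sB (t - 1)) (u t)))
                + \<gamma> t *\<^sub>R fisher \<mu> p h G (f (sB (t - 1)) (u t)) (u t)"
    and B_s: "\<And>t. t \<ge> 1 \<Longrightarrow>
          sB t = f (sB (t - 1)) (u t) + \<eta> t *\<^sub>R (matrix_inv (J t) *v G (f (sB (t - 1)) (u t)) (u t) (y t))"
  shows "\<forall>t. sA t = sB t \<and> PA t = \<eta> t *\<^sub>R matrix_inv (J t)"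
proof
  fix t show "sA t = sB t \<and> PA t = \<eta> t *\<^sub>R matrix_inv (J t)"
  proof (induction t)
    case 0 thus ?case using init_s init_P by simp
  next
    case (Suc n)
    have s1: "Suc n \<ge> 1" by simp
    have P: "PA (Suc n) = \<eta> (Suc n) *\<^sub>R matrix_inv (J (Suc n))"
    proof (rule step)
      show "invertible ((1 + \<alpha> (Suc n)) *\<^sub>R (Fm (sA n) (u (Suc n)) ** PA n ** transpose (Fm (sA n) (u (Suc n)))))"
        using inv_Ppred[OF s1] by simp
      show "PA n = \<eta> n *\<^sub>R matrix_inv (J n)" using Suc.IH by simp
      show "1 / \<eta> (Suc n) = 1 / (1 + \<alpha> (Suc n)) * (1 / \<eta> n) + 1" using \<eta>_rec[OF s1] by simp
      show "matrix_inv (PA (Suc n)) = matrix_inv ((1 + \<alpha> (Suc n)) *\<^sub>R (Fm (sA n) (u (Suc n)) ** PA n ** transpose (Fm (sA n) (u (Suc n)))))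
            + fisher \<mu> p h G (f (sA n) (u (Suc n))) (u (Suc n))" using A_P[OF s1] by simp
      show "J (Suc n) = (1 - \<eta> (Suc n)) *\<^sub>R (transpose (matrix_inv (Fm (sA n) (u (Suc n)))) ** J n ** matrix_inv (Fm (sA n) (u (Suc n))))
            + \<eta> (Suc n) *\<^sub>R fisher \<mu> p h G (f (sA n) (u (Suc n))) (u (Suc n))"
        using B_J[OF s1] \<gamma>_eq[OF s1] Suc.IH by simp
    qed (use inv_J inv_PA \<alpha>_nonneg \<eta>_pos in auto)
    have "sA (Suc n) = sB (Suc n)"
      using A_s[OF s1] B_s[OF s1] Suc.IH P by (simp add: scale_mv)
    with P show ?case by simp
  qed
qed

end
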